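(* Let $M$ and $M'$ be two stable matchings in an instance $I$ of SPA-S, and let $M^\land$ be the assignment defined from $M,M'$ in the context. Then $M^\land$ is a stable matching.
   Context: An instance $I$ of SPA-S consists of a finite set $\mathcal{S}$ of students, a finite set $\mathcal{P}$ of projects and a finite set $\mathcal{L}$ of lecturers. Each student $s_i$ ranks a subset $A_i\subseteq\mathcal{P}$ (its acceptable projects) in strict order. Each project is offered by exactly one lecturer; lecturer $l_k$ offers a nonempty set $P_k\subseteq\mathcal{P}$, the $P_k$ partitioning $\mathcal{P}$. Each lecturer $l_k$ ranks in strict order the students who find at least one project of $P_k$ acceptable. Projects have capacities $c_j\in\mathbb{Z}^+$, lecturers have capacities $d_k\in\mathbb{Z}^+$ with $\max\{c_j:p_j\in P_k\}\le d_k\le\sum\{c_j:p_j\in P_k\}$. A pair $(s_i,p_j)$, $p_j$ offered by $l_k$, is acceptable if $p_j\in A_i$ and $s_i$ is on $l_k$'s list. A matching $M$ is a set of acceptable pairs with each student in at most one pair, $|M(p_j)|\le c_j$, $|M(l_k)|\le d_k$, where for an assignment $M$ (a set of acceptable pairs), $M(s_i)$, $M(p_j)$, $M(l_k)$ denote the project of $s_i$, the students assigned to $p_j$, and the students assigned to projects of $l_k$. Undersubscribed/full means fewer than/exactly capacity many assigned students. An acceptable pair $(s_i,p_j)\notin M$ ($p_j$ offered by $l_k$) blocks $M$ if ($s_i$ is unassigned or prefers $p_j$ to $M(s_i)$) and one of: (P1) $p_j$ and $l_k$ undersubscribed; (P2) $p_j$ undersubscribed, $l_k$ full, $s_i\in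 M(l_k)$; (P3) $p_j$ undersubscribed, $l_k$ full, $l_k$ prefers $s_i$ to the worst student of $M(l_k)$; (P4) $p_j$ full and $l_k$ prefers $s_i$ to the worst student of $M(p_j)$. $M$ is stable if it is a matching with no blocking pair. Given stable matchings $M,M'$, $M^\land$ is the assignment in which each student unassigned in both $M$ and $M'$ is unassigned, each student assigned to the same project in both is assigned to that project, and every other student is assigned to the better (in her preference) of her projects in $M$ and $M'$. *)

theory Defs
  imports Main
begin

text \<open>A s: acceptable projects of student s.
  sp s p q: student s strictly prefers project p to project q (strict total order on A s).
  lect p: the lecturer offering p.
  lp l s t: lecturer l strictly prefers student s to student t (strict total order on its list).
  c p, d l: capacities.\<close>

definition strict_total_on :: "'a set \<Rightarrow> ('a \<Rightarrow> 'a \<Rightarrow> bool) \<Rightarrow> bool" where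
  "strict_total_on X r \<longleftrightarrow>
     (\<forall>x y. r x y \<longrightarrow> x \<in> X \<and> y \<in> X) \<and>
     (\<forall>x\<in>X. \<not> r x x) \<and>
     (\<forall>x\<in>X. \<forall>y\<in>X. \<forall>z\<in>X. r x y \<longrightarrow> r y z \<longrightarrow> r x z) \<and>
     (\<forall>x\<in>X. \<forall>y\<in>X. x \<noteq> y \<longrightarrow> r x y \<or> r y x)"

definition offers :: "('p \<Rightarrow> 'l) \<Rightarrow> 'p set \<Rightarrow> 'l \<Rightarrow> 'p set" where
  "offers lect P l = {p \<in> P. lect p = l}"

definition lect_list :: "'s set \<Rightarrow> ('s \<Rightarrow> 'p set) \<Rightarrow> ('p \<Rightarrow> 'l) \<Rightarrow> 'p set \<Rightarrow> 'l \<Rightarrow> 's set" where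
  "lect_list S A lect P l = {s \<in> S. A s \<inter> offers lect P l \<noteq> {}}"

definition spa_instance ::
  "'s set \<Rightarrow> 'p set \<Rightarrow> 'l set \<Rightarrow> ('s \<Rightarrow> 'p set) \<Rightarrow> ('s \<Rightarrow> 'p \<Rightarrow> 'p \<Rightarrow> bool)
   \<Rightarrow> ('p \<Rightarrow> 'l) \<Rightarrow> ('l \<Rightarrow> 's \<Rightarrow> 's \<Rightarrow> bool) \<Rightarrow> ('p \<Rightarrow> nat) \<Rightarrow> ('l \<Rightarrow> nat) \<Rightarrow> bool" where
  "spa_instance S P L A sp lect lp c d \<longleftrightarrow>
     finite S \<and> finite P \<and> finite L \<and>
     (\<forall>s\<in>S. A s \<subseteq> P) \<and>
     (\<forall>s\<in>S. strict_total_on (A s) (sp s)) \<and>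
     (\<forall>p\<in>P. lect p \<in> L) \<and>
     (\<forall>l\<in>L. offers lect P l \<noteq> {}) \<and>
     (\<forall>l\<in>L. strict_total_on (lect_list S A lect P l) (lp l)) \<and>
     (\<forall>p\<in>P. c p > 0) \<and>
     (\<forall>l\<in>L. Max (c ` offers lect P l) \<le> d l \<and> d l \<le> (\<Sum>p\<in>offers lect P l. c p))"

definition acceptable_pair ::
  "'s set \<Rightarrow> 'p set \<Rightarrow> ('s \<Rightarrow> 'p set) \<Rightarrow> ('p \<Rightarrow> 'l) \<Rightarrow> 's \<Rightarrow> 'p \<Rightarrow> bool" where
  "acceptable_pair S P A lect s p \<longleftrightarrow>
     s \<in> S \<and> p \<in> P \<and> p \<in> A s \<and> s \<in> lect_list S A lect P (lect p)"

definition Mp :: "('s \<times> 'p) set \<Rightarrow> 'p \<Rightarrow> 's set" where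
  "Mp M p = {s. (s, p) \<in> M}"

definition Ml :: "('s \<times> 'p) set \<Rightarrow> ('p \<Rightarrow> 'l) \<Rightarrow> 'l \<Rightarrow> 's set" where
  "Ml M lect l = {s. \<exists>p. (s, p) \<in> M \<and> lect p = l}"

definition is_matching ::
  "'s set \<Rightarrow> 'p set \<Rightarrow> ('s \<Rightarrow> 'p set) \<Rightarrow> ('p \<Rightarrow> 'l) \<Rightarrow> ('p \<Rightarrow> nat) \<Rightarrow> ('l \<Rightarrow> nat)
   \<Rightarrow> ('s \<times> 'p) set \<Rightarrow> bool" where
  "is_matching S P A lect c d M \<longleftrightarrow>
     (\<forall>(s, p)\<in>M. acceptable_pair S P A lect s p) \<and>
     (\<forall>s p q. (s, p) \<in> M \<longrightarrow> (s, q) \<in> M \<longrightarrow> p = q) \<and>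
     (\<forall>p\<in>P. card (Mp M p) \<le> c p) \<and>
     (\<forall>l. card (Ml M lect l) \<le> d l)"

definition is_worst :: "('l \<Rightarrow> 's \<Rightarrow> 's \<Rightarrow> bool) \<Rightarrow> 'l \<Rightarrow> 's set \<Rightarrow> 's \<Rightarrow> bool" where
  "is_worst lp l X w \<longleftrightarrow> w \<in> X \<and> (\<forall>u\<in>X. u \<noteq> w \<longrightarrow> lp l u w)"

definition prefers_to_worst :: "('l \<Rightarrow> 's \<Rightarrow> 's \<Rightarrow> bool) \<Rightarrow> 'l \<Rightarrow> 's set \<Rightarrow> 's \<Rightarrow> bool" where
  "prefers_to_worst lp l X s \<longleftrightarrow> (\<exists>w. is_worst lp l X w \<and> lp l s w)"

definition blocking_pair ::
  "'s set \<Rightarrow> 'p set \<Rightarrow> ('s \<Rightarrow> 'p set) \<Rightarrow> ('s \<Rightarrow> 'p \<Rightarrow> 'p \<Rightarrow> bool)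
   \<Rightarrow> ('p \<Rightarrow> 'l) \<Rightarrow> ('l \<Rightarrow> 's \<Rightarrow> 's \<Rightarrow> bool) \<Rightarrow> ('p \<Rightarrow> nat) \<Rightarrow> ('l \<Rightarrow> nat)
   \<Rightarrow> ('s \<times> 'p) set \<Rightarrow> 's \<Rightarrow> 'p \<Rightarrow> bool" where
  "blocking_pair S P A sp lect lp c d M s p \<longleftrightarrow>
     (let l = lect p in
     acceptable_pair S P A lect s p \<and> (s, p) \<notin> M \<and>
     ((\<forall>q. (s, q) \<notin> M) \<or> (\<exists>q. (s, q) \<in> M \<and> sp s p q)) \<and>
     ((card (Mp M p) < c p \<and> card (Ml M lect l) < d l) \<or>
      (card (Mp M p) < c p \<and> card (Ml M lect l) = d l \<and> s \<in> Ml M lect l) \<or>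
      (card (Mp M p) < c p \<and> card (Ml M lect l) = d l \<and> prefers_to_worst lp l (Ml M lect l) s) \<or>
      (card (Mp M p) = c p \<and> prefers_to_worst lp l (Mp M p) s)))"

definition spa_stable ::
  "'s set \<Rightarrow> 'p set \<Rightarrow> ('s \<Rightarrow> 'p set) \<Rightarrow> ('s \<Rightarrow> 'p \<Rightarrow> 'p \<Rightarrow> bool)
   \<Rightarrow> ('p \<Rightarrow> 'l) \<Rightarrow> ('l \<Rightarrow> 's \<Rightarrow> 's \<Rightarrow> bool) \<Rightarrow> ('p \<Rightarrow> nat) \<Rightarrow> ('l \<Rightarrow> nat)
   \<Rightarrow> ('s \<times> 'p) set \<Rightarrow> bool" where
  "spa_stable S P A sp lect lp c d M \<longleftrightarrow>
     is_matching S P A lect c d M \<and>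
     (\<forall>s p. \<not> blocking_pair S P A sp lect lp c d M s p)"

text \<open>M-meet: students with the same project in both keep it; otherwise each student gets the
  better of her projects in M and M' (a student assigned in only one of them gets that project,
  unassigned being worse than any project); students unassigned in both stay unassigned.\<close>
definition meet :: "('s \<Rightarrow> 'p \<Rightarrow> 'p \<Rightarrow> bool) \<Rightarrow> ('s \<times> 'p) set \<Rightarrow> ('s \<times> 'p) set \<Rightarrow> ('s \<times> 'p) set" where
  "meet sp M M' =
     {(s, p). ((s, p) \<in> M \<and> (\<forall>q. (s, q) \<in> M' \<longrightarrow> q = p \<or> sp s p q)) \<or>
              ((s, p) \<in> M' \<and> (\<forall>q. (s, q) \<in> M \<longrightarrow> q = p \<or> sp s p q))}"

end

theory Submission
  imports Defs
begin


locale spa =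
  fixes S :: "'s set" and P :: "'p set" and L :: "'l set"
    and A :: "'s \<Rightarrow> 'p set" and sp :: "'s \<Rightarrow> 'p \<Rightarrow> 'p \<Rightarrow> bool"
    and lect :: "'p \<Rightarrow> 'l" and lp :: "'l \<Rightarrow> 's \<Rightarrow> 's \<Rightarrow> bool"
    and c :: "'p \<Rightarrow> nat" and d :: "'l \<Rightarrow> nat"
  assumes inst: "spa_instance S P L A sp lect lp c d"
begin

abbreviation "LL l \<equiv> lect_list S A lect P l"
abbreviation "Q l \<equiv> offers lect P l"
abbreviation matching :: "('s \<times> 'p) set \<Rightarrow> bool" where "matching M \<equiv> is_matching S P A lect c d M"
abbreviation stable :: "('s \<times> 'p) set \<Rightarrow> bool" where "stable M \<equiv> spa_stable S P A sp lect lp c d M"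

lemma finS: "finite S" and finP: "finite P" and finL: "finite L"
  using inst by (auto simp: spa_instance_def)

lemma sp_sto: "s \<in> S \<Longrightarrow> strict_total_on (A s) (sp s)"
  using inst by (auto simp: spa_instance_def)

lemma lp_sto: "l \<in> L \<Longrightarrow> strict_total_on (LL l) (lp l)"
  using inst by (auto simp: spa_instance_def)

lemma lectL: "p \<in> P \<Longrightarrow> lect p \<in> L"
  using inst by (auto simp: spa_instance_def)

lemma cpos: "p \<in> P \<Longrightarrow> c p > 0"
  using inst by (auto simp: spa_instance_def)

lemma finQ: "finite (Q l)"
  using finP by (auto simp: offers_def)

lemma dge: assumes "p \<in> P" shows "c p \<le> d (lect p)"
proof -
  have "Max (c ` Q (lect p)) \<le> d (lect p)" using inst lectL[OF assms] by (auto simp: spa_instance_def)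
  moreover have "c p \<le> Max (c ` Q (lect p))" using finQ assms by (auto simp: offers_def)
  ultimately show ?thesis by simp
qed

lemma sp_irrefl: "s \<in> S \<Longrightarrow> \<not> sp s p p"
  using sp_sto[of s] unfolding strict_total_on_def by blast
lemma sp_trans: "s \<in> S \<Longrightarrow> sp s p q \<Longrightarrow> sp s q r \<Longrightarrow> sp s p r"
  using sp_sto[of s] unfolding strict_total_on_def by blast
lemma sp_asym: "s \<in> S \<Longrightarrow> sp s p q \<Longrightarrow> sp s q p \<Longrightarrow> False"
  using sp_trans sp_irrefl by blast
lemma sp_total: "s \<in> S \<Longrightarrow> p \<in> A s \<Longrightarrow> q \<in> A s \<Longrightarrow> p \<noteq> q \<Longrightarrow> sp s p q \<or> sp s q p"
  using sp_sto[of s] unfolding strict_total_on_def by blast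

lemma lp_irrefl: "l \<in> L \<Longrightarrow> \<not> lp l u u"
  using lp_sto[of l] unfolding strict_total_on_def by blast
lemma lp_mem: "l \<in> L \<Longrightarrow> lp l u v \<Longrightarrow> u \<in> LL l \<and> v \<in> LL l"
  using lp_sto[of l] unfolding strict_total_on_def by blast
lemma lp_trans: "l \<in> L \<Longrightarrow> lp l u v \<Longrightarrow> lp l v w \<Longrightarrow> lp l u w"
  using lp_sto[of l] unfolding strict_total_on_def by blast
lemma lp_asym: "l \<in> L \<Longrightarrow> lp l u v \<Longrightarrow> lp l v u \<Longrightarrow> False"
  using lp_trans lp_irrefl by blast
lemma lp_total: "l \<in> L \<Longrightarrow> u \<in> LL l \<Longrightarrow> v \<in> LL l \<Longrightarrow> u \<noteq> v \<Longrightarrow> lp l u v \<or> lp l v u"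
  using lp_sto[of l] unfolding strict_total_on_def by blast

lemma exists_worst:
  assumes "finite X" "X \<noteq> {}" "X \<subseteq> LL l" "l \<in> L"
  shows "\<exists>w. is_worst lp l X w"
  using assms(1,2,3)
proof (induction X rule: finite_ne_induct)
  case (singleton x) then show ?case by (auto simp: is_worst_def)
next
  case (insert x F)
  then obtain w where w: "is_worst lp l F w" by auto
  show ?case
  proof (cases "lp l x w")
    case True
    then show ?thesis using w by (auto simp: is_worst_def)
  next
    case False
    have "x \<noteq> w" using w insert by (auto simp: is_worst_def)
    then have "lp l w x" using lp_total[OF assms(4), of x w] False w insert by (auto simp: is_worst_def)
    then have "is_worst lp l (insert x F) x" using w lp_trans[OF assms(4)] by (auto simp: is_worst_def)
    then show ?thesis by blast
  qed
qed

lemma worst_trans: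
  assumes "finite X" "X \<subseteq> LL l" "l \<in> L" "w \<in> X" "lp l s w"
  shows "prefers_to_worst lp l X s"
proof -
  obtain w' where w': "is_worst lp l X w'" using exists_worst[of X l] assms by auto
  have "lp l s w'"
  proof (cases "w = w'")
    case True then show ?thesis using assms by simp
  next
    case False then have "lp l w w'" using w' assms by (auto simp: is_worst_def)
    then show ?thesis using lp_trans[OF assms(3) assms(5)] by blast
  qed
  then show ?thesis using w' by (auto simp: prefers_to_worst_def)
qed

lemma not_ptw:
  assumes "finite X" "X \<noteq> {}" "X \<subseteq> LL l" "l \<in> L" "s \<in> LL l" "s \<notin> X"
    "\<not> prefers_to_worst lp l X s"
  shows "\<forall>u\<in>X. lp l u s"
proof -
  obtain w where w: "is_worst lp l X w" using exists_worst[of X l] assms by auto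
  have "s \<noteq> w" using w assms by (auto simp: is_worst_def)
  moreover have "\<not> lp l s w" using w assms(7) by (auto simp: prefers_to_worst_def)
  ultimately have "lp l w s" using lp_total[OF assms(4) assms(5), of w] w assms(3) by (auto simp: is_worst_def)
  then show ?thesis using w lp_trans[OF assms(4)] by (auto simp: is_worst_def)
qed

lemma m_acc: "matching M \<Longrightarrow> (s, p) \<in> M \<Longrightarrow> s \<in> S \<and> p \<in> P \<and> p \<in> A s \<and> s \<in> LL (lect p)"
  unfolding is_matching_def acceptable_pair_def by blast
lemma m_uniq: "matching M \<Longrightarrow> (s, p) \<in> M \<Longrightarrow> (s, q) \<in> M \<Longrightarrow> p = q"
  unfolding is_matching_def by blast
lemma m_cap: "matching M \<Longrightarrow> p \<in> P \<Longrightarrow> card (Mp M p) \<le> c p"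
  unfolding is_matching_def by blast
lemma m_lcap: "matching M \<Longrightarrow> card (Ml M lect l) \<le> d l"
  unfolding is_matching_def by blast

lemma Mp_S: "matching M \<Longrightarrow> Mp M p \<subseteq> S"
  using m_acc by (auto simp: Mp_def)
lemma Mp_fin: "matching M \<Longrightarrow> finite (Mp M p)"
  using Mp_S finS finite_subset by metis
lemma Mp_LL: "matching M \<Longrightarrow> Mp M p \<subseteq> LL (lect p)"
  using m_acc by (auto simp: Mp_def)
lemma Ml_S: "matching M \<Longrightarrow> Ml M lect l \<subseteq> S"
  using m_acc by (auto simp: Ml_def)
lemma Ml_fin: "matching M \<Longrightarrow> finite (Ml M lect l)"
  using Ml_S finS finite_subset by metis
lemma Ml_LL: "matching M \<Longrightarrow> Ml M lect l \<subseteq> LL l"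
  using m_acc by (auto simp: Ml_def)
lemma Mp_Ml: "Mp M p \<subseteq> Ml M lect (lect p)"
  by (auto simp: Mp_def Ml_def)

lemma Ml_UN: "matching M \<Longrightarrow> Ml M lect l = (\<Union>p\<in>Q l. Mp M p)"
  using m_acc by (auto simp: Ml_def Mp_def offers_def)

lemma card_Ml: assumes "matching M" shows "card (Ml M lect l) = (\<Sum>p\<in>Q l. card (Mp M p))"
proof -
  have "card (\<Union>p\<in>Q l. Mp M p) = (\<Sum>p\<in>Q l. card (Mp M p))"
    by (rule card_UN_disjoint) (use finQ Mp_fin[OF assms] m_uniq[OF assms] in \<open>auto simp: Mp_def\<close>)
  then show ?thesis using Ml_UN[OF assms] by simp
qed


lemma NBg:
  assumes st: "stable M'" and acc: "acceptable_pair S P A lect s p" and nin: "(s, p) \<notin> M'"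
    and pr: "\<forall>q. (s, q) \<in> M' \<longrightarrow> sp s p q"
  shows "(card (Mp M' p) = c p \<and> (\<forall>u\<in>Mp M' p. lp (lect p) u s)) \<or>
         (card (Mp M' p) < c p \<and> card (Ml M' lect (lect p)) = d (lect p) \<and> s \<notin> Ml M' lect (lect p)
          \<and> (\<forall>u\<in>Ml M' lect (lect p). lp (lect p) u s))"
proof -
  have m: "matching M'" using st by (simp add: spa_stable_def)
  have nb: "\<not> blocking_pair S P A sp lect lp c d M' s p" using st by (simp add: spa_stable_def)
  have sP: "p \<in> P" and sS: "s \<in> S" and sL: "s \<in> LL (lect p)" using acc by (auto simp: acceptable_pair_def)
  have lL: "lect p \<in> L" using lectL[OF sP] .
  have stud: "(\<forall>q. (s, q) \<notin> M') \<or> (\<exists>q. (s, q) \<in> M' \<and> sp s p q)" using pr by blast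
  have cap: "card (Mp M' p) \<le> c p" using m_cap[OF m sP] .
  have lcap: "card (Ml M' lect (lect p)) \<le> d (lect p)" using m_lcap[OF m] .
  show ?thesis
  proof (cases "card (Mp M' p) = c p")
    case True
    then have "\<not> prefers_to_worst lp (lect p) (Mp M' p) s" using nb acc nin stud by (auto simp: blocking_pair_def Let_def)
    moreover have "Mp M' p \<noteq> {}" using True cpos[OF sP] by auto
    moreover have "s \<notin> Mp M' p" using nin by (auto simp: Mp_def)
    ultimately have "\<forall>u\<in>Mp M' p. lp (lect p) u s"
      using not_ptw[OF Mp_fin[OF m] _ Mp_LL[OF m] lL sL] by blast
    then show ?thesis using True by blast
  next
    case False
    then have lt: "card (Mp M' p) < c p" using cap by simp
    then have full: "card (Ml M' lect (lect p)) = d (lect p)" using nb acc nin stud lcap by (auto simp: blocking_pair_def Let_def)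
    have notin: "s \<notin> Ml M' lect (lect p)" using nb acc nin stud lt full by (auto simp: blocking_pair_def Let_def)
    have npw: "\<not> prefers_to_worst lp (lect p) (Ml M' lect (lect p)) s" using nb acc nin stud lt full by (auto simp: blocking_pair_def Let_def)
    have "Ml M' lect (lect p) \<noteq> {}" using full dge[OF sP] cpos[OF sP] by auto
    then have "\<forall>u\<in>Ml M' lect (lect p). lp (lect p) u s"
      using not_ptw[OF Ml_fin[OF m] _ Ml_LL[OF m] lL sL notin npw] by blast
    then show ?thesis using lt full notin by blast
  qed
qed

definition SMs :: "('s \<times> 'p) set \<Rightarrow> ('s \<times> 'p) set \<Rightarrow> 's set" where
  "SMs M M' = {s. \<exists>p. (s, p) \<in> M \<and> (\<forall>q. (s, q) \<in> M' \<longrightarrow> sp s p q)}"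

definition xx :: "('s \<times> 'p) set \<Rightarrow> ('s \<times> 'p) set \<Rightarrow> 'p \<Rightarrow> nat" where
  "xx M M' p = card (Mp M p \<inter> SMs M M')"
definition ww :: "('s \<times> 'p) set \<Rightarrow> ('s \<times> 'p) set \<Rightarrow> 'p \<Rightarrow> nat" where
  "ww M M' p = card (Mp M' p \<inter> SMs M M')"
definition ee :: "('s \<times> 'p) set \<Rightarrow> ('s \<times> 'p) set \<Rightarrow> 'p \<Rightarrow> nat" where
  "ee M M' p = card (Mp M p \<inter> Mp M' p)"

lemma ee_sym: "ee M M' p = ee M' M p"
  by (simp add: ee_def Int_commute)

lemma SMs_p: "matching M \<Longrightarrow> (s, p) \<in> M \<Longrightarrow> s \<in> SMs M M' \<longleftrightarrow> (\<forall>q. (s, q) \<in> M' \<longrightarrow> sp s p q)"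
proof -
  assume m: "matching M" and sp: "(s, p) \<in> M"
  show ?thesis
  proof
    assume "s \<in> SMs M M'"
    then obtain p' where "(s, p') \<in> M" "\<forall>q. (s, q) \<in> M' \<longrightarrow> sp s p' q" unfolding SMs_def by blast
    moreover have "p' = p" using m_uniq[OF m calculation(1) sp] .
    ultimately show "\<forall>q. (s, q) \<in> M' \<longrightarrow> sp s p q" by simp
  next
    assume "\<forall>q. (s, q) \<in> M' \<longrightarrow> sp s p q"
    then show "s \<in> SMs M M'" using sp unfolding SMs_def by blast
  qed
qed

lemma SMs_S: "matching M \<Longrightarrow> SMs M M' \<subseteq> S"
  using m_acc by (auto simp: SMs_def)

lemma SMs_disj: assumes "matching M" "matching M'" "s \<in> SMs M M'" "s \<in> SMs M' M" shows False
proof -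
  obtain p where p: "(s,p) \<in> M" "\<forall>q. (s, q) \<in> M' \<longrightarrow> sp s p q" using assms(3) by (auto simp: SMs_def)
  obtain q where q: "(s,q) \<in> M'" "\<forall>r. (s, r) \<in> M \<longrightarrow> sp s q r" using assms(4) by (auto simp: SMs_def)
  have "s \<in> S" using m_acc[OF assms(1) p(1)] by simp
  then show False using sp_asym p q by blast
qed

lemma SMs_notin: "matching M \<Longrightarrow> (s, p) \<in> M \<Longrightarrow> s \<in> SMs M M' \<Longrightarrow> (s, p) \<notin> M'"
  using SMs_p[of M s p M'] m_acc sp_irrefl by blast

lemma not_SMs: assumes "matching M" "matching M'" "(s,p) \<in> M" "(s,p) \<notin> M'" "s \<notin> SMs M M'"
  shows "s \<in> SMs M' M"
proof -
  obtain q where q: "(s,q) \<in> M'" "\<not> sp s p q" using SMs_p[OF assms(1,3)] assms(5) by blast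
  have "p \<noteq> q" using q assms(4) by auto
  then have "sp s q p" using sp_total[of s p q] m_acc[OF assms(1,3)] m_acc[OF assms(2) q(1)] q(2) by blast
  then show ?thesis using SMs_p[OF assms(2) q(1), of M] m_uniq[OF assms(1) assms(3)] by blast
qed

lemma Mp_decomp: assumes "matching M" "matching M'"
  shows "Mp M p = (Mp M p \<inter> Mp M' p) \<union> (Mp M p \<inter> SMs M M') \<union> (Mp M p \<inter> SMs M' M)"
  using not_SMs[OF assms] by (auto simp: Mp_def)

lemma card_Mp: assumes "matching M" "matching M'"
  shows "card (Mp M p) = ee M M' p + xx M M' p + ww M' M p"
proof -
  have f: "finite (Mp M p)" using Mp_fin[OF assms(1)] .
  have "card (Mp M p) = card ((Mp M p \<inter> Mp M' p) \<union> (Mp M p \<inter> SMs M M') \<union> (Mp M p \<inter> SMs M' M))"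
    using Mp_decomp[OF assms] by simp
  also have "\<dots> = card ((Mp M p \<inter> Mp M' p) \<union> (Mp M p \<inter> SMs M M')) + card (Mp M p \<inter> SMs M' M)"
  proof (rule card_Un_disjoint)
    show "finite (Mp M p \<inter> Mp M' p \<union> Mp M p \<inter> SMs M M')" using f by blast
    show "finite (Mp M p \<inter> SMs M' M)" using f by blast
    show "(Mp M p \<inter> Mp M' p \<union> Mp M p \<inter> SMs M M') \<inter> (Mp M p \<inter> SMs M' M) = {}"
    proof (rule equals0I)
      fix x assume x: "x \<in> (Mp M p \<inter> Mp M' p \<union> Mp M p \<inter> SMs M M') \<inter> (Mp M p \<inter> SMs M' M)"
      then have "x \<in> SMs M' M" "(x,p) \<in> M" "(x,p) \<in> M' \<or> x \<in> SMs M M'"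
        by (auto simp: Mp_def)
      then show False using SMs_notin[OF assms(2)] SMs_disj[OF assms] by blast
    qed
  qed
  also have "card ((Mp M p \<inter> Mp M' p) \<union> (Mp M p \<inter> SMs M M')) = card (Mp M p \<inter> Mp M' p) + card (Mp M p \<inter> SMs M M')"
  proof (rule card_Un_disjoint)
    show "finite (Mp M p \<inter> Mp M' p)" using f by blast
    show "finite (Mp M p \<inter> SMs M M')" using f by blast
    show "(Mp M p \<inter> Mp M' p) \<inter> (Mp M p \<inter> SMs M M') = {}"
    proof (rule equals0I)
      fix x assume x: "x \<in> (Mp M p \<inter> Mp M' p) \<inter> (Mp M p \<inter> SMs M M')"
      then have "(x,p) \<in> M'" "x \<in> SMs M M'" "(x,p) \<in> M" by (auto simp: Mp_def)
      then show False using SMs_notin[OF assms(1)] by blast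
    qed
  qed
  finally show ?thesis by (simp add: ee_def xx_def ww_def)
qed

lemma card_Mp': assumes "matching M" "matching M'"
  shows "card (Mp M' p) = ee M M' p + ww M M' p + xx M' M p"
  using card_Mp[OF assms(2,1), of p] ee_sym[of M M' p] by simp

lemma meet_sym: "meet sp M M' = meet sp M' M"
  by (auto simp: meet_def)

lemma meet_char: assumes "matching M" "matching M'"
  shows "(s,p) \<in> meet sp M M' \<longleftrightarrow> ((s,p) \<in> M \<and> (s,p) \<in> M') \<or> ((s,p) \<in> M \<and> s \<in> SMs M M') \<or> ((s,p) \<in> M' \<and> s \<in> SMs M' M)"
proof
  assume "(s,p) \<in> meet sp M M'"
  then consider "(s,p) \<in> M" "\<forall>q. (s, q) \<in> M' \<longrightarrow> q = p \<or> sp s p q" | "(s,p) \<in> M'" "\<forall>q. (s, q) \<in> M \<longrightarrow> q = p \<or> sp s p q"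
    by (auto simp: meet_def)
  then show "((s,p) \<in> M \<and> (s,p) \<in> M') \<or> ((s,p) \<in> M \<and> s \<in> SMs M M') \<or> ((s,p) \<in> M' \<and> s \<in> SMs M' M)"
  proof cases
    case 1 then show ?thesis using SMs_p[OF assms(1) 1(1), of M'] by (cases "(s,p) \<in> M'") auto
  next
    case 2 then show ?thesis using SMs_p[OF assms(2) 2(1), of M] by (cases "(s,p) \<in> M") auto
  qed
next
  assume "((s,p) \<in> M \<and> (s,p) \<in> M') \<or> ((s,p) \<in> M \<and> s \<in> SMs M M') \<or> ((s,p) \<in> M' \<and> s \<in> SMs M' M)"
  then consider "(s,p) \<in> M" "(s,p) \<in> M'" | "(s,p) \<in> M" "s \<in> SMs M M'" | "(s,p) \<in> M'" "s \<in> SMs M' M" by blast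
  then show "(s,p) \<in> meet sp M M'"
  proof cases
    case 1
    then have "\<forall>q. (s, q) \<in> M' \<longrightarrow> q = p" using m_uniq[OF assms(2)] by blast
    then show ?thesis using 1 unfolding meet_def by blast
  next
    case 2
    then have "\<forall>q. (s, q) \<in> M' \<longrightarrow> sp s p q" using SMs_p[OF assms(1) 2(1)] by blast
    then show ?thesis using 2 unfolding meet_def by blast
  next
    case 3
    then have "\<forall>q. (s, q) \<in> M \<longrightarrow> sp s p q" using SMs_p[OF assms(2) 3(1)] by blast
    then show ?thesis using 3 unfolding meet_def by blast
  qed
qed

lemma Mp_meet: assumes "matching M" "matching M'"
  shows "Mp (meet sp M M') p = (Mp M p \<inter> Mp M' p) \<union> (Mp M p \<inter> SMs M M') \<union> (Mp M' p \<inter> SMs M' M)"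
  by (rule set_eqI) (simp add: Mp_def meet_char[OF assms])

lemma card_Mp_meet: assumes "matching M" "matching M'"
  shows "card (Mp (meet sp M M') p) = ee M M' p + xx M M' p + xx M' M p"
proof -
  have f: "finite (Mp M p)" "finite (Mp M' p)" using Mp_fin assms by auto
  have "card (Mp (meet sp M M') p) = card ((Mp M p \<inter> Mp M' p) \<union> (Mp M p \<inter> SMs M M') \<union> (Mp M' p \<inter> SMs M' M))"
    using Mp_meet[OF assms] by simp
  also have "\<dots> = card ((Mp M p \<inter> Mp M' p) \<union> (Mp M p \<inter> SMs M M')) + card (Mp M' p \<inter> SMs M' M)"
  proof (rule card_Un_disjoint)
    show "finite (Mp M p \<inter> Mp M' p \<union> Mp M p \<inter> SMs M M')" using f by blast
    show "finite (Mp M' p \<inter> SMs M' M)" using f by blast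
    show "(Mp M p \<inter> Mp M' p \<union> Mp M p \<inter> SMs M M') \<inter> (Mp M' p \<inter> SMs M' M) = {}"
    proof (rule equals0I)
      fix x assume x: "x \<in> (Mp M p \<inter> Mp M' p \<union> Mp M p \<inter> SMs M M') \<inter> (Mp M' p \<inter> SMs M' M)"
      then have "(x,p) \<in> M'" "x \<in> SMs M' M" "(x,p) \<in> M" by (auto simp: Mp_def)
      then show False using SMs_notin[OF assms(2)] by blast
    qed
  qed
  also have "card ((Mp M p \<inter> Mp M' p) \<union> (Mp M p \<inter> SMs M M')) = card (Mp M p \<inter> Mp M' p) + card (Mp M p \<inter> SMs M M')"
  proof (rule card_Un_disjoint)
    show "finite (Mp M p \<inter> Mp M' p)" using f by blast
    show "finite (Mp M p \<inter> SMs M M')" using f by blast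
    show "(Mp M p \<inter> Mp M' p) \<inter> (Mp M p \<inter> SMs M M') = {}"
    proof (rule equals0I)
      fix x assume x: "x \<in> (Mp M p \<inter> Mp M' p) \<inter> (Mp M p \<inter> SMs M M')"
      then have "(x,p) \<in> M'" "x \<in> SMs M M'" "(x,p) \<in> M" by (auto simp: Mp_def)
      then show False using SMs_notin[OF assms(1)] by blast
    qed
  qed
  finally show ?thesis by (simp add: ee_def xx_def ww_def)
qed

end



lemma sum_le_eq:
  fixes f g :: "'a \<Rightarrow> nat"
  assumes "finite I" "\<forall>i\<in>I. f i \<le> g i" "sum g I \<le> sum f I"
  shows "\<forall>i\<in>I. f i = g i"
proof (rule ccontr)
  assume "\<not> (\<forall>i\<in>I. f i = g i)"
  then have "\<exists>a\<in>I. f a < g a" using assms(2) by force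
  then have "sum f I < sum g I" using sum_strict_mono_ex1[OF assms(1,2)] by blast
  then show False using assms(3) by simp
qed

lemma sum_le_eq2:
  fixes f g h :: "'a \<Rightarrow> nat"
  assumes "finite I" "\<forall>i\<in>I. f i + g i \<le> h i" "sum h I \<le> sum f I"
  shows "\<forall>i\<in>I. g i = 0 \<and> f i = h i"
proof -
  have "\<forall>i\<in>I. f i + g i = h i"
    using sum_le_eq[OF assms(1,2)] assms(3) sum_mono[of I f "\<lambda>i. f i + g i"] by (simp add: sum.distrib)
  moreover have "sum h I = (\<Sum>i\<in>I. f i + g i)" by (rule sum.cong) (use calculation in auto)
  then have "sum g I = 0" using assms(3) by (simp add: sum.distrib)
  moreover note calculation
  ultimately show ?thesis using assms(1) by simp
qed

context spa begin

lemma st_m: "stable M \<Longrightarrow> matching M"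
  by (simp add: spa_stable_def)

lemma NB_all:
  assumes st: "stable M'" and m: "matching M" and sp: "(s,p) \<in> M" and sm: "s \<in> SMs M M'"
  shows "\<forall>u\<in>Mp M' p. lp (lect p) u s"
proof -
  have acc: "acceptable_pair S P A lect s p" using m_acc[OF m sp] by (simp add: acceptable_pair_def)
  have nin: "(s,p) \<notin> M'" using SMs_notin[OF m sp sm] .
  have pr: "\<forall>q. (s, q) \<in> M' \<longrightarrow> sp s p q" using SMs_p[OF m sp] sm by blast
  show ?thesis using NBg[OF st acc nin pr] Mp_Ml[of M' p] by blast
qed

lemma F0:
  assumes st: "stable M" and st': "stable M'"
  shows "xx M M' p = 0 \<or> xx M' M p = 0"
proof (rule ccontr)
  assume "\<not> (xx M M' p = 0 \<or> xx M' M p = 0)"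
  then have "Mp M p \<inter> SMs M M' \<noteq> {}" "Mp M' p \<inter> SMs M' M \<noteq> {}" by (auto simp: xx_def)
  then obtain s t where s: "s \<in> Mp M p" "s \<in> SMs M M'" and t: "t \<in> Mp M' p" "t \<in> SMs M' M" by blast
  have m: "matching M" "matching M'" using st st' by (auto simp: st_m)
  have "lp (lect p) t s" using NB_all[OF st' m(1) _ s(2)] s(1) t(1) by (auto simp: Mp_def)
  moreover have "lp (lect p) s t" using NB_all[OF st m(2) _ t(2)] s(1) t(1) by (auto simp: Mp_def)
  moreover have "lect p \<in> L" using m_acc[OF m(1)] s(1) lectL by (auto simp: Mp_def)
  ultimately show False using lp_asym by blast
qed

definition LII :: "('s \<times> 'p) set \<Rightarrow> ('s \<times> 'p) set \<Rightarrow> 'l \<Rightarrow> bool" where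
  "LII M M' l \<longleftrightarrow> card (Ml M' lect l) = d l \<and> (\<exists>s0\<in>Ml M lect l. \<forall>u\<in>Ml M' lect l. lp l u s0)"

lemma Fii:
  assumes st: "stable M" and st': "stable M'" and x: "xx M M' p > 0" and lt: "card (Mp M' p) < c p"
  shows "LII M M' (lect p)"
proof -
  have m: "matching M" "matching M'" using st st' by (auto simp: st_m)
  obtain s where s: "s \<in> Mp M p" "s \<in> SMs M M'" using x by (auto simp: xx_def card_gt_0_iff)
  have sp: "(s,p) \<in> M" using s by (simp add: Mp_def)
  have acc: "acceptable_pair S P A lect s p" using m_acc[OF m(1) sp] by (simp add: acceptable_pair_def)
  have nin: "(s,p) \<notin> M'" using SMs_notin[OF m(1) sp s(2)] .
  have pr: "\<forall>q. (s, q) \<in> M' \<longrightarrow> sp s p q" using SMs_p[OF m(1) sp] s(2) by blast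
  have "card (Ml M' lect (lect p)) = d (lect p) \<and> (\<forall>u\<in>Ml M' lect (lect p). lp (lect p) u s)"
    using NBg[OF st' acc nin pr] lt by auto
  moreover have "s \<in> Ml M lect (lect p)" using s(1) Mp_Ml[of M p] by blast
  ultimately show ?thesis unfolding LII_def by blast
qed

lemma LII_excl: "l \<in> L \<Longrightarrow> LII M M' l \<Longrightarrow> LII M' M l \<Longrightarrow> False"
  unfolding LII_def using lp_asym by blast

lemma PT:
  assumes st: "stable M" and st': "stable M'" and pP: "p \<in> P" and nl: "\<not> LII M M' (lect p)"
  shows "xx M M' p + (if xx M M' p > 0 then ww M' M p else 0) \<le> ww M M' p \<and> (xx M M' p > 0 \<longrightarrow> card (Mp M' p) = c p)"
proof (cases "xx M M' p > 0")
  case False then show ?thesis by simp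
next
  case True
  have m: "matching M" "matching M'" using st st' by (auto simp: st_m)
  have full: "card (Mp M' p) = c p" using Fii[OF st st' True] nl m_cap[OF m(2) pP] by fastforce
  have y: "xx M' M p = 0" using F0[OF st st', of p] True by simp
  have "card (Mp M p) \<le> c p" using m_cap[OF m(1) pP] .
  then show ?thesis using card_Mp[OF m, of p] card_Mp'[OF m, of p] full y True by simp
qed

lemma C1:
  assumes st: "stable M" and st': "stable M'" and lL: "l \<in> L"
  shows "(\<Sum>p\<in>Q l. xx M M' p) \<le> (\<Sum>p\<in>Q l. ww M M' p)"
proof (cases "LII M M' l")
  case False
  have "\<forall>p\<in>Q l. xx M M' p \<le> ww M M' p"
  proof
    fix p assume "p \<in> Q l"
    then have "p \<in> P" "lect p = l" by (auto simp: offers_def)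
    then show "xx M M' p \<le> ww M M' p" using PT[OF st st' \<open>p \<in> P\<close>] False by auto
  qed
  then show ?thesis by (intro sum_mono) blast
next
  case True
  have m: "matching M" "matching M'" using st st' by (auto simp: st_m)
  have nl: "\<not> LII M' M l" using LII_excl[OF lL True] by blast
  have yz: "(\<Sum>p\<in>Q l. xx M' M p) \<le> (\<Sum>p\<in>Q l. ww M' M p)"
  proof (rule sum_mono)
    fix p assume "p \<in> Q l"
    then have "p \<in> P" "lect p = l" by (auto simp: offers_def)
    then show "xx M' M p \<le> ww M' M p" using PT[OF st' st \<open>p \<in> P\<close>] nl by auto
  qed
  have "card (Ml M lect l) \<le> card (Ml M' lect l)" using True m_lcap[OF m(1)] by (simp add: LII_def)
  then have "(\<Sum>p\<in>Q l. ee M M' p + xx M M' p + ww M' M p) \<le> (\<Sum>p\<in>Q l. ee M M' p + ww M M' p + xx M' M p)"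
    using card_Ml[OF m(1)] card_Ml[OF m(2)] card_Mp[OF m] card_Mp'[OF m] by simp
  then show ?thesis using yz by (simp add: sum.distrib)
qed

lemma G:
  assumes st: "stable M" and st': "stable M'"
  shows "(\<Sum>p\<in>P. ww M M' p) \<le> (\<Sum>p\<in>P. xx M M' p)"
proof -
  have m: "matching M" "matching M'" using st st' by (auto simp: st_m)
  have fS: "finite (Mp M p)" "finite (Mp M' p)" for p using Mp_fin m by auto
  have e1: "card (\<Union>p\<in>P. Mp M p \<inter> SMs M M') = (\<Sum>p\<in>P. xx M M' p)"
    unfolding xx_def
    by (rule card_UN_disjoint) (use finP fS m_uniq[OF m(1)] in \<open>auto simp: Mp_def\<close>)
  have e2: "card (\<Union>p\<in>P. Mp M' p \<inter> SMs M M') = (\<Sum>p\<in>P. ww M M' p)"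
    unfolding ww_def
    by (rule card_UN_disjoint) (use finP fS m_uniq[OF m(2)] in \<open>auto simp: Mp_def\<close>)
  have sub: "(\<Union>p\<in>P. Mp M' p \<inter> SMs M M') \<subseteq> (\<Union>p\<in>P. Mp M p \<inter> SMs M M')"
  proof
    fix s assume "s \<in> (\<Union>p\<in>P. Mp M' p \<inter> SMs M M')"
    then have "s \<in> SMs M M'" by blast
    then obtain p where "(s,p) \<in> M" unfolding SMs_def by blast
    then show "s \<in> (\<Union>p\<in>P. Mp M p \<inter> SMs M M')" using m_acc[OF m(1)] \<open>s \<in> SMs M M'\<close> by (auto simp: Mp_def)
  qed
  have "finite (\<Union>p\<in>P. Mp M p \<inter> SMs M M')" using finP fS by blast
  then show ?thesis using card_mono[OF _ sub] e1 e2 by simp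
qed

lemma regroup: "(\<Sum>p\<in>P. f p) = (\<Sum>l\<in>L. \<Sum>p\<in>Q l. f p)"
proof -
  have "P = (\<Union>l\<in>L. Q l)" using lectL by (auto simp: offers_def)
  then have "(\<Sum>p\<in>P. f p) = (\<Sum>p\<in>(\<Union>l\<in>L. Q l). f p)" by simp
  also have "\<dots> = (\<Sum>l\<in>L. \<Sum>p\<in>Q l. f p)"
    by (rule sum.UNION_disjoint) (use finL finQ in \<open>auto simp: offers_def\<close>)
  finally show ?thesis .
qed

lemma tight:
  assumes st: "stable M" and st': "stable M'" and lL: "l \<in> L"
  shows "(\<Sum>p\<in>Q l. xx M M' p) = (\<Sum>p\<in>Q l. ww M M' p)"
proof -
  have "\<forall>l\<in>L. (\<Sum>p\<in>Q l. xx M M' p) \<le> (\<Sum>p\<in>Q l. ww M M' p)" using C1[OF st st'] by blast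
  moreover have "(\<Sum>l\<in>L. \<Sum>p\<in>Q l. ww M M' p) \<le> (\<Sum>l\<in>L. \<Sum>p\<in>Q l. xx M M' p)"
    using G[OF st st'] regroup[of "ww M M'"] regroup[of "xx M M'"] by simp
  ultimately show ?thesis using sum_le_eq[OF finL, of "\<lambda>l. \<Sum>p\<in>Q l. xx M M' p" "\<lambda>l. \<Sum>p\<in>Q l. ww M M' p"] lL by blast
qed

end



context spa begin

lemma N_sub: "meet sp M M' \<subseteq> M \<union> M'"
  by (auto simp: meet_def)

lemma N_uniq:
  assumes m: "matching M" "matching M'" and a: "(s,p) \<in> meet sp M M'" "(s,q) \<in> meet sp M M'"
  shows "p = q"
proof -
  note u = m_uniq[OF m(1), of s] m_uniq[OF m(2), of s]
  from a(1) consider "(s,p) \<in> M" "(s,p) \<in> M'" | "(s,p) \<in> M" "s \<in> SMs M M'" | "(s,p) \<in> M'" "s \<in> SMs M' M"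
    using meet_char[OF m] by blast
  then show ?thesis
  proof cases
    case 1
    then show ?thesis using a(2) N_sub u by blast
  next
    case 2
    from a(2) consider "(s,q) \<in> M" | "(s,q) \<in> M'" "s \<in> SMs M' M" using meet_char[OF m] by blast
    then show ?thesis
    proof cases
      case 1 then show ?thesis using 2 u by blast
    next
      case 2 then show ?thesis using \<open>s \<in> SMs M M'\<close> SMs_disj[OF m] by blast
    qed
  next
    case 3
    from a(2) consider "(s,q) \<in> M'" | "(s,q) \<in> M" "s \<in> SMs M M'" using meet_char[OF m] by blast
    then show ?thesis
    proof cases
      case 1 then show ?thesis using 3 u by blast
    next
      case 2 then show ?thesis using \<open>s \<in> SMs M' M\<close> SMs_disj[OF m] by blast
    qed
  qed
qed

lemma N_better:
  assumes m: "matching M" "matching M'" and q: "(s,q) \<in> M"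
  shows "\<exists>r. (s,r) \<in> meet sp M M' \<and> (r = q \<or> sp s r q)"
proof (cases "(s,q) \<in> M' \<or> s \<in> SMs M M'")
  case True then show ?thesis using meet_char[OF m] q by blast
next
  case False
  then have "s \<in> SMs M' M" using not_SMs[OF m q] by blast
  then obtain q' where q': "(s,q') \<in> M'" "\<forall>r. (s,r) \<in> M \<longrightarrow> sp s q' r" unfolding SMs_def by blast
  then have "(s,q') \<in> meet sp M M'" using meet_char[OF m] \<open>s \<in> SMs M' M\<close> by blast
  then show ?thesis using q'(2) q by blast
qed

lemma pref:
  assumes m: "matching M" "matching M'" and sS: "s \<in> S"
    and stud: "(\<forall>q. (s, q) \<notin> meet sp M M') \<or> (\<exists>q. (s, q) \<in> meet sp M M' \<and> sp s p q)"
  shows "\<forall>q. (s,q) \<in> M \<longrightarrow> sp s p q"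
proof (intro allI impI)
  fix q assume q: "(s,q) \<in> M"
  obtain r where r: "(s,r) \<in> meet sp M M'" "r = q \<or> sp s r q" using N_better[OF m q] by blast
  then obtain r0 where r0: "(s,r0) \<in> meet sp M M'" "sp s p r0" using stud by blast
  have "r0 = r" using N_uniq[OF m r0(1) r(1)] .
  then show "sp s p q" using r(2) r0(2) sp_trans[OF sS] by blast
qed

lemma card_Ml_g:
  assumes "N \<subseteq> S \<times> P" "\<forall>s p q. (s,p) \<in> N \<longrightarrow> (s,q) \<in> N \<longrightarrow> p = q"
  shows "card (Ml N lect l) = (\<Sum>p\<in>Q l. card (Mp N p))"
proof -
  have e: "Ml N lect l = (\<Union>p\<in>Q l. Mp N p)" using assms(1) by (auto simp: Ml_def Mp_def offers_def)
  have f: "finite (Mp N p)" for p using finite_subset[OF _ finS, of "Mp N p"] assms(1) by (auto simp: Mp_def)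
  have "card (\<Union>p\<in>Q l. Mp N p) = (\<Sum>p\<in>Q l. card (Mp N p))"
    by (rule card_UN_disjoint) (use finQ f assms(2) in \<open>auto simp: Mp_def\<close>)
  then show ?thesis using e by simp
qed

lemma N_SP: "matching M \<Longrightarrow> matching M' \<Longrightarrow> meet sp M M' \<subseteq> S \<times> P"
  using N_sub m_acc by fastforce

lemma L1:
  assumes st: "stable M" and st': "stable M'" and lL: "l \<in> L"
  shows "card (Ml (meet sp M M') lect l) = card (Ml M lect l) \<and> card (Ml (meet sp M M') lect l) = card (Ml M' lect l)"
proof -
  have m: "matching M" "matching M'" using st st' by (auto simp: st_m)
  have cN: "card (Ml (meet sp M M') lect l) = (\<Sum>p\<in>Q l. ee M M' p + xx M M' p + xx M' M p)"
    using card_Ml_g[OF N_SP[OF m]] N_uniq[OF m] card_Mp_meet[OF m] by simp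
  have cM: "card (Ml M lect l) = (\<Sum>p\<in>Q l. ee M M' p + xx M M' p + ww M' M p)"
    using card_Ml[OF m(1)] card_Mp[OF m] by simp
  have cM': "card (Ml M' lect l) = (\<Sum>p\<in>Q l. ee M M' p + ww M M' p + xx M' M p)"
    using card_Ml[OF m(2)] card_Mp'[OF m] by simp
  have t1: "(\<Sum>p\<in>Q l. xx M M' p) = (\<Sum>p\<in>Q l. ww M M' p)" using tight[OF st st' lL] .
  have t2: "(\<Sum>p\<in>Q l. xx M' M p) = (\<Sum>p\<in>Q l. ww M' M p)" using tight[OF st' st lL] .
  show ?thesis using cN cM cM' t1 t2 by (simp add: sum.distrib)
qed

lemma eqM:
  assumes m: "matching M" "matching M'" and z: "xx M' M p = 0" "ww M' M p = 0"
  shows "Mp (meet sp M M') p = Mp M p"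
proof -
  have f: "finite (Mp M p)" "finite (Mp M' p)" using Mp_fin m by auto
  have "Mp M' p \<inter> SMs M' M = {}" using z(1) f by (simp add: xx_def)
  moreover have "Mp M p \<inter> SMs M' M = {}" using z(2) f by (simp add: ww_def)
  ultimately have z1: "Mp M' p \<inter> SMs M' M = {}" and z2: "Mp M p \<inter> SMs M' M = {}" by auto
  have d1: "Mp (meet sp M M') p = (Mp M p \<inter> Mp M' p) \<union> (Mp M p \<inter> SMs M M') \<union> (Mp M' p \<inter> SMs M' M)"
    by (rule Mp_meet[OF m])
  have d2: "Mp M p = (Mp M p \<inter> Mp M' p) \<union> (Mp M p \<inter> SMs M M') \<union> (Mp M p \<inter> SMs M' M)"
    by (rule Mp_decomp[OF m])
  show ?thesis using d1 d2 z1 z2 by (metis Un_empty_right)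
qed

lemma eqM':
  assumes m: "matching M" "matching M'" and z: "xx M M' p = 0" "ww M M' p = 0"
  shows "Mp (meet sp M M') p = Mp M' p"
  using eqM[OF m(2) m(1) z] meet_sym by metis

definition K1 :: "('s \<times> 'p) set \<Rightarrow> ('s \<times> 'p) set \<Rightarrow> ('s \<times> 'p) set \<Rightarrow> 'l \<Rightarrow> bool" where
  "K1 N M M' l \<longleftrightarrow> (\<forall>p\<in>Q l. (Mp N p = Mp M p \<or> Mp N p = Mp M' p) \<and> card (Mp M p) = card (Mp M' p))"

definition K2 :: "('s \<times> 'p) set \<Rightarrow> ('s \<times> 'p) set \<Rightarrow> ('s \<times> 'p) set \<Rightarrow> 'l \<Rightarrow> bool" where
  "K2 N M M' l \<longleftrightarrow> card (Ml M lect l) = d l \<and> (\<exists>s0\<in>Ml M lect l. \<forall>u\<in>Ml M' lect l. lp l u s0) \<and>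
     (\<forall>p\<in>Q l. Mp N p = Mp M p \<or> (Mp N p = Mp M' p \<and> card (Mp M' p) = c p))"

lemma K2_lemma:
  assumes st: "stable M" and st': "stable M'" and lL: "l \<in> L" and li: "LII M M' l"
  shows "K2 (meet sp M M') M M' l"
proof -
  have m: "matching M" "matching M'" using st st' by (auto simp: st_m)
  have nl: "\<not> LII M' M l" using LII_excl[OF lL li] by blast
  have pt: "\<forall>p\<in>Q l. xx M' M p + (if xx M' M p > 0 then ww M M' p else 0) \<le> ww M' M p \<and> (xx M' M p > 0 \<longrightarrow> card (Mp M p) = c p)"
    using PT[OF st' st] nl by (auto simp: offers_def)
  have t2: "(\<Sum>p\<in>Q l. ww M' M p) \<le> (\<Sum>p\<in>Q l. xx M' M p)" using tight[OF st' st lL] by simp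
  have eq: "\<forall>p\<in>Q l. (if xx M' M p > 0 then ww M M' p else 0) = 0 \<and> xx M' M p = ww M' M p"
  proof (rule sum_le_eq2[OF finQ _ t2])
    show "\<forall>p\<in>Q l. xx M' M p + (if xx M' M p > 0 then ww M M' p else 0) \<le> ww M' M p" using pt by blast
  qed
  have pp: "Mp (meet sp M M') p = Mp M p \<or> (Mp (meet sp M M') p = Mp M' p \<and> card (Mp M' p) = c p)" if pQ: "p \<in> Q l" for p
  proof (cases "xx M' M p > 0")
    case True
    have w: "ww M M' p = 0" using eq pQ True by auto
    have x: "xx M M' p = 0" using F0[OF st st', of p] True by simp
    have "card (Mp M p) = c p" using pt pQ True by blast
    moreover have "card (Mp M' p) = card (Mp M p)" using card_Mp[OF m, of p] card_Mp'[OF m, of p] w x eq pQ by simp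
    ultimately show ?thesis using eqM'[OF m x w] by simp
  next
    case False
    then show ?thesis using eqM[OF m] eq pQ by simp
  qed
  have "card (Ml M lect l) = d l" using li L1[OF st st' lL] by (simp add: LII_def)
  then show ?thesis using li pp unfolding K2_def LII_def by blast
qed

lemma K_lemma:
  assumes st: "stable M" and st': "stable M'" and lL: "l \<in> L"
  shows "K1 (meet sp M M') M M' l \<or> K2 (meet sp M M') M M' l \<or> K2 (meet sp M M') M' M l"
proof -
  have m: "matching M" "matching M'" using st st' by (auto simp: st_m)
  consider "LII M M' l" | "LII M' M l" | "\<not> LII M M' l" "\<not> LII M' M l" by blast
  then show ?thesis
  proof cases
    case 1 then show ?thesis using K2_lemma[OF st st' lL] by blast
  next
    case 2 then show ?thesis using K2_lemma[OF st' st lL] meet_sym by metis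
  next
    case 3
    have pt1: "\<forall>p\<in>Q l. xx M M' p + (if xx M M' p > 0 then ww M' M p else 0) \<le> ww M M' p"
      using PT[OF st st'] 3 by (auto simp: offers_def)
    have pt2: "\<forall>p\<in>Q l. xx M' M p + (if xx M' M p > 0 then ww M M' p else 0) \<le> ww M' M p"
      using PT[OF st' st] 3 by (auto simp: offers_def)
    have t1: "(\<Sum>p\<in>Q l. ww M M' p) \<le> (\<Sum>p\<in>Q l. xx M M' p)" using tight[OF st st' lL] by simp
    have t2: "(\<Sum>p\<in>Q l. ww M' M p) \<le> (\<Sum>p\<in>Q l. xx M' M p)" using tight[OF st' st lL] by simp
    have e1: "\<forall>p\<in>Q l. (if xx M M' p > 0 then ww M' M p else 0) = 0 \<and> xx M M' p = ww M M' p"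
      using sum_le_eq2[OF finQ pt1 t1] .
    have e2: "\<forall>p\<in>Q l. (if xx M' M p > 0 then ww M M' p else 0) = 0 \<and> xx M' M p = ww M' M p"
      using sum_le_eq2[OF finQ pt2 t2] .
    have "(Mp (meet sp M M') p = Mp M p \<or> Mp (meet sp M M') p = Mp M' p) \<and> card (Mp M p) = card (Mp M' p)"
      if pQ: "p \<in> Q l" for p
    proof -
      have c: "card (Mp M p) = card (Mp M' p)" using card_Mp[OF m, of p] card_Mp'[OF m, of p] e1 e2 pQ by simp
      show ?thesis
      proof (cases "xx M M' p > 0")
        case True
        then have "ww M' M p = 0" using e1 pQ by auto
        moreover have "xx M' M p = 0" using F0[OF st st', of p] True by simp
        ultimately show ?thesis using eqM[OF m] c by simp
      next
        case False
        then have "ww M M' p = 0" using e1 pQ by auto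
        then show ?thesis using eqM'[OF m] c False by simp
      qed
    qed
    then show ?thesis unfolding K1_def by blast
  qed
qed

end



context spa begin

lemma mkblock:
  assumes st: "stable M" and acc: "acceptable_pair S P A lect s p" and nin: "(s,p) \<notin> M"
    and pr: "\<forall>q. (s,q) \<in> M \<longrightarrow> sp s p q"
    and cond: "(card (Mp M p) < c p \<and> card (Ml M lect (lect p)) < d (lect p)) \<or>
      (card (Mp M p) < c p \<and> card (Ml M lect (lect p)) = d (lect p) \<and> s \<in> Ml M lect (lect p)) \<or>
      (card (Mp M p) < c p \<and> card (Ml M lect (lect p)) = d (lect p) \<and> prefers_to_worst lp (lect p) (Ml M lect (lect p)) s) \<or>
      (card (Mp M p) = c p \<and> prefers_to_worst lp (lect p) (Mp M p) s)"
  shows False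
proof -
  have stud: "(\<forall>q. (s, q) \<notin> M) \<or> (\<exists>q. (s, q) \<in> M \<and> sp s p q)" using pr by blast
  have "blocking_pair S P A sp lect lp c d M s p"
    unfolding blocking_pair_def Let_def using acc nin stud cond by blast
  then show False using st by (simp add: spa_stable_def)
qed

lemma K2_block:
  assumes st: "stable M" and m': "matching M'" and lL: "lect p \<in> L"
    and K: "K2 N M M' (lect p)" and pQ: "p \<in> Q (lect p)"
    and under: "card (Mp N p) < c p"
    and cN: "card (Ml N lect (lect p)) = card (Ml M lect (lect p))"
    and subN: "Ml N lect (lect p) \<subseteq> Ml M lect (lect p) \<union> Ml M' lect (lect p)"
    and finN: "finite (Ml N lect (lect p))"
    and acc: "acceptable_pair S P A lect s p" and nin: "(s,p) \<notin> M"
    and pr: "\<forall>q. (s,q) \<in> M \<longrightarrow> sp s p q"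
    and cond: "(card (Ml N lect (lect p)) < d (lect p)) \<or>
      (card (Ml N lect (lect p)) = d (lect p) \<and> s \<in> Ml N lect (lect p)) \<or>
      (card (Ml N lect (lect p)) = d (lect p) \<and> prefers_to_worst lp (lect p) (Ml N lect (lect p)) s)"
  shows False
proof -
  define l where "l = lect p"
  have m: "matching M" using st by (simp add: st_m)
  have full: "card (Ml M lect l) = d l" using K unfolding K2_def l_def by blast
  obtain s0 where s0: "s0 \<in> Ml M lect l" "\<forall>u\<in>Ml M' lect l. lp l u s0" using K unfolding K2_def l_def by blast
  have "Mp N p = Mp M p \<or> (Mp N p = Mp M' p \<and> card (Mp M' p) = c p)" using K pQ unfolding K2_def by blast
  then have eqp: "Mp N p = Mp M p" using under by auto
  have undM: "card (Mp M p) < c p" using eqp under by simp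
  have sL: "s \<in> LL l" using acc by (simp add: acceptable_pair_def l_def)
  have lL': "l \<in> L" using lL l_def by simp
  have ptw: "prefers_to_worst lp l (Ml M lect l) s" if "lp l s w" "w \<in> Ml M lect l" for w
    using worst_trans[OF Ml_fin[OF m] Ml_LL[OF m] lL' that(2,1)] .
  have ptw0: "prefers_to_worst lp l (Ml M lect l) s" if "s \<in> Ml M' lect l" 
    using ptw[OF _ s0(1)] s0(2) that by blast
  have cN': "card (Ml N lect l) = d l" using cN full l_def by simp
  have "(card (Mp M p) < c p \<and> card (Ml M lect l) = d l \<and> s \<in> Ml M lect l) \<or>
      (card (Mp M p) < c p \<and> card (Ml M lect l) = d l \<and> prefers_to_worst lp l (Ml M lect l) s)"
  proof -
    from cond consider "s \<in> Ml N lect l" | "prefers_to_worst lp l (Ml N lect l) s"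
      using cN' l_def by auto
    then show ?thesis
    proof cases
      case 1
      then have "s \<in> Ml M lect l \<or> s \<in> Ml M' lect l" using subN l_def by blast
      then show ?thesis using ptw0 undM full by blast
    next
      case 2
      then obtain w where w: "is_worst lp l (Ml N lect l) w" "lp l s w" unfolding prefers_to_worst_def by blast
      then have wN: "w \<in> Ml N lect l" unfolding is_worst_def by blast
      then have "w \<in> Ml M lect l \<or> w \<in> Ml M' lect l" using subN l_def by blast
      then have "prefers_to_worst lp l (Ml M lect l) s"
      proof
        assume "w \<in> Ml M lect l" then show ?thesis using ptw w(2) by blast
      next
        assume "w \<in> Ml M' lect l"
        then have "lp l w s0" using s0 by blast
        then have "lp l s s0" using lp_trans[OF lL' w(2)] by blast
        then show ?thesis using ptw s0(1) by blast
      qed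
      then show ?thesis using undM full by blast
    qed
  qed
  then show False using mkblock[OF st acc nin pr] l_def by blast
qed

lemma main:
  assumes st: "stable M" and st': "stable M'"
  shows "stable (meet sp M M')"
proof -
  define N where "N = meet sp M M'"
  have m: "matching M" "matching M'" using st st' by (auto simp: st_m)
  have sub: "N \<subseteq> M \<union> M'" using N_sub N_def by simp
  have acc: "\<forall>(s,p)\<in>N. acceptable_pair S P A lect s p"
    using sub m_acc[OF m(1)] m_acc[OF m(2)] by (fastforce simp: acceptable_pair_def)
  have uniq: "\<forall>s p q. (s, p) \<in> N \<longrightarrow> (s, q) \<in> N \<longrightarrow> p = q" using N_uniq[OF m] N_def by blast
  have NSP: "N \<subseteq> S \<times> P" using N_SP[OF m] N_def by simp
  have finMlN: "finite (Ml N lect l)" for l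
    using finite_subset[OF _ finS, of "Ml N lect l"] NSP by (auto simp: Ml_def)
  have pcap: "\<forall>p\<in>P. card (Mp N p) \<le> c p"
  proof
    fix p assume pP: "p \<in> P"
    have "card (Mp N p) = ee M M' p + xx M M' p + xx M' M p" using card_Mp_meet[OF m] N_def by simp
    moreover have "card (Mp M p) \<le> c p" "card (Mp M' p) \<le> c p" using m_cap m pP by auto
    ultimately show "card (Mp N p) \<le> c p"
      using card_Mp[OF m, of p] card_Mp'[OF m, of p] F0[OF st st', of p] by auto
  qed
  have L1N: "card (Ml N lect l) = card (Ml M lect l) \<and> card (Ml N lect l) = card (Ml M' lect l)" if "l \<in> L" for l
    using L1[OF st st' that] N_def by simp
  have lcap: "\<forall>l. card (Ml N lect l) \<le> d l"
  proof
    fix l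
    show "card (Ml N lect l) \<le> d l"
    proof (cases "l \<in> L")
      case True then show ?thesis using L1N m_lcap[OF m(1)] by metis
    next
      case False
      then have "Ml N lect l = {}" using NSP lectL by (auto simp: Ml_def)
      then show ?thesis by simp
    qed
  qed
  have mN: "matching N" unfolding is_matching_def using acc uniq pcap lcap by blast
  have SubMl: "Ml N lect l \<subseteq> Ml M lect l \<union> Ml M' lect l" for l using sub by (auto simp: Ml_def)
  have nb: "\<not> blocking_pair S P A sp lect lp c d N s p" for s p
  proof
    assume bp: "blocking_pair S P A sp lect lp c d N s p"
    define l where "l = lect p"
    have accp: "acceptable_pair S P A lect s p" and ninN: "(s,p) \<notin> N"
      and stud: "(\<forall>q. (s, q) \<notin> N) \<or> (\<exists>q. (s, q) \<in> N \<and> sp s p q)"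
      and cond: "(card (Mp N p) < c p \<and> card (Ml N lect l) < d l) \<or>
      (card (Mp N p) < c p \<and> card (Ml N lect l) = d l \<and> s \<in> Ml N lect l) \<or>
      (card (Mp N p) < c p \<and> card (Ml N lect l) = d l \<and> prefers_to_worst lp l (Ml N lect l) s) \<or>
      (card (Mp N p) = c p \<and> prefers_to_worst lp l (Mp N p) s)"
      using bp unfolding blocking_pair_def Let_def l_def by blast+
    have sS: "s \<in> S" and pP: "p \<in> P" and sL: "s \<in> LL l" using accp by (auto simp: acceptable_pair_def l_def)
    have lL: "l \<in> L" using lectL[OF pP] l_def by simp
    have pQ: "p \<in> Q l" using pP l_def by (simp add: offers_def)
    have prM: "\<forall>q. (s,q) \<in> M \<longrightarrow> sp s p q" using pref[OF m sS] stud N_def by blast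
    have prM': "\<forall>q. (s,q) \<in> M' \<longrightarrow> sp s p q" using pref[OF m(2) m(1) sS] stud N_def meet_sym by metis
    have ninM: "(s,p) \<notin> M" using prM sp_irrefl[OF sS] by blast
    have ninM': "(s,p) \<notin> M'" using prM' sp_irrefl[OF sS] by blast
    have allM: "\<forall>u\<in>Mp M p. lp l u s" using NBg[OF st accp ninM prM] Mp_Ml[of M p] l_def by blast
    have allM': "\<forall>u\<in>Mp M' p. lp l u s" using NBg[OF st' accp ninM' prM'] Mp_Ml[of M' p] l_def by blast
    have MpN: "Mp N p \<subseteq> Mp M p \<union> Mp M' p" using sub by (auto simp: Mp_def)
    show False
    proof (cases "card (Mp N p) = c p \<and> prefers_to_worst lp l (Mp N p) s")
      case True
      then obtain w where w: "w \<in> Mp N p" "lp l s w" unfolding prefers_to_worst_def is_worst_def by blast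
      then have "lp l w s" using MpN allM allM' by blast
      then show False using w(2) lp_asym[OF lL] by blast
    next
      case False
      then have under: "card (Mp N p) < c p" and
        cond2: "card (Ml N lect l) < d l \<or> (card (Ml N lect l) = d l \<and> s \<in> Ml N lect l) \<or>
          (card (Ml N lect l) = d l \<and> prefers_to_worst lp l (Ml N lect l) s)"
        using cond by auto
      have K: "K1 N M M' l \<or> K2 N M M' l \<or> K2 N M' M l" using K_lemma[OF st st' lL] N_def by simp
      then show False
      proof (elim disjE)
        assume "K2 N M M' l"
        then show False
          using K2_block[OF st m(2) _ _ _ under _ _ _ accp ninM prM] lL pQ L1N[OF lL] SubMl finMlN cond2 l_def by blast
      next
        assume "K2 N M' M l"
        then show False
          using K2_block[OF st' m(1) _ _ _ under _ _ _ accp ninM' prM'] lL pQ L1N[OF lL] SubMl[of l] finMlN cond2 l_def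
          by (metis Un_commute)
      next
        assume "K1 N M M' l"
        then have "(Mp N p = Mp M p \<or> Mp N p = Mp M' p) \<and> card (Mp M p) = card (Mp M' p)"
          using pQ unfolding K1_def by blast
        then have uM: "card (Mp M p) < c p" and uM': "card (Mp M' p) < c p" using under by auto
        have cM: "card (Ml N lect l) = card (Ml M lect l)" and cM': "card (Ml N lect l) = card (Ml M' lect l)"
          using L1N[OF lL] by auto
        have ptwX: "prefers_to_worst lp l (Ml X lect l) s" if "matching X" "w \<in> Ml X lect l" "lp l s w" for X w
          using worst_trans[OF Ml_fin[OF that(1)] Ml_LL[OF that(1)] lL that(2,3)] .
        from cond2 consider "card (Ml N lect l) < d l" | "card (Ml N lect l) = d l" "s \<in> Ml N lect l"
          | "card (Ml N lect l) = d l" "prefers_to_worst lp l (Ml N lect l) s" by blast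
        then show False
        proof cases
          case 1
          then show False using mkblock[OF st accp ninM prM] uM cM l_def by auto
        next
          case 2
          then have "s \<in> Ml M lect l \<or> s \<in> Ml M' lect l" using SubMl by blast
          then show False
            using mkblock[OF st accp ninM prM] mkblock[OF st' accp ninM' prM'] uM uM' cM cM' 2(1) l_def by auto
        next
          case 3
          then obtain w where w: "w \<in> Ml N lect l" "lp l s w" unfolding prefers_to_worst_def is_worst_def by blast
          then have "w \<in> Ml M lect l \<or> w \<in> Ml M' lect l" using SubMl by blast
          then have "prefers_to_worst lp l (Ml M lect l) s \<or> prefers_to_worst lp l (Ml M' lect l) s"
            using ptwX[OF m(1)] ptwX[OF m(2)] w(2) by blast
          then show False
            using mkblock[OF st accp ninM prM] mkblock[OF st' accp ninM' prM'] uM uM' cM cM' 3(1) l_def by auto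
        qed
      qed
    qed
  qed
  show ?thesis unfolding spa_stable_def N_def[symmetric] using mN nb by blast
qed

end

theorem lemma8:
  assumes "spa_instance S P L A sp lect lp c d"
    and "spa_stable S P A sp lect lp c d M"
    and "spa_stable S P A sp lect lp c d M'"
  shows "spa_stable S P A sp lect lp c d (meet sp M M')"
  using spa.main[OF _ assms(2,3)] assms(1) spa.intro by blast


end
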